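(* Consider a homogeneous weighted stochastic block model with two communities, each of size $n$: the vertex set $\{1,\dots,2n\}$ is partitioned into two communities of size $n$, and each pair $(i,j)$ independently receives a random weight $W_{(i,j)}$ with $W_{(i,j)}\sim p_n$ if $i,j$ lie in the same community and $W_{(i,j)}\sim q_n$ otherwise. Let $F$ be the event that the maximum likelihood estimator of the community assignment (based on observing all weights $W_{(i,j)}$) fails to coincide with the true partition. Then \[ \mathbb{P}(F)\le \sum_{k=1}^{n/2}\exp\Big(2k\Big(\log\frac{n}{k}+1\Big)-2k(n-k)I\Big), \] where the sum is over integers $1\le k\le n/2$ and $I$ is the Renyi divergence of order $\tfrac12$ between $p_n$ and $q_n$, namely $I=-2\log\int_{-\infty}^{\infty}\sqrt{p_n(x)q_n(x)}\,dx$ when $p_n,q_n$ are continuous distributions on $\mathbb{R}$ (with densities $p_n,q_n$), and $I=-2\log\sum_{\ell\ge 0}\sqrt{p_n(\ell)q_n(\ell)}$ when $p_n,q_n$ are discrete distributions on $\mathbb{N}$.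
   Context: The distributions $p_n$ (within-community) and $q_n$ (between-community) are arbitrary (both continuous on $\mathbb{R}$ or both discrete on $\mathbb{N}$); weights of distinct pairs are independent given the community assignment. *)

theory Defs
  imports "HOL-Probability.Probability"
begin

text \<open>Vertices are 0, ..., 2n-1. The true community assignment puts vertex i in
community True iff i < n. A community assignment is a predicate sigma on vertices.\<close>

definition pairs :: "nat \<Rightarrow> (nat \<times> nat) set" where
  "pairs n = {(i, j). i < j \<and> j < 2 * n}"

definition true_assign :: "nat \<Rightarrow> nat \<Rightarrow> bool" where
  "true_assign n = (\<lambda>i. i < n)"

definition balanced :: "nat \<Rightarrow> (nat \<Rightarrow> bool) \<Rightarrow> bool" where
  "balanced n \<sigma> = (card {i. i < 2 * n \<and> \<sigma> i} = n)"

definition same_partition :: "nat \<Rightarrow> (nat \<Rightarrow> bool) \<Rightarrow> (nat \<Rightarrow> bool) \<Rightarrow> bool" where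
  "same_partition n \<sigma> \<tau> = ((\<forall>i<2 * n. \<sigma> i = \<tau> i) \<or> (\<forall>i<2 * n. \<sigma> i \<noteq> \<tau> i))"

definition likelihood ::
  "nat \<Rightarrow> ('a \<Rightarrow> real) \<Rightarrow> ('a \<Rightarrow> real) \<Rightarrow> (nat \<Rightarrow> bool) \<Rightarrow> (nat \<times> nat \<Rightarrow> 'a) \<Rightarrow> real" where
  "likelihood n p q \<sigma> w =
     (\<Prod>e\<in>pairs n. if \<sigma> (fst e) = \<sigma> (snd e) then p (w e) else q (w e))"

definition is_density :: "'a measure \<Rightarrow> ('a \<Rightarrow> real) \<Rightarrow> bool" where
  "is_density \<mu> p =
     (p \<in> borel_measurable \<mu> \<and> (\<forall>x\<in>space \<mu>. 0 \<le> p x) \<and> (\<integral>\<^sup>+x. ennreal (p x) \<partial>\<mu>) = 1)"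

definition wsbm_measure ::
  "'a measure \<Rightarrow> nat \<Rightarrow> ('a \<Rightarrow> real) \<Rightarrow> ('a \<Rightarrow> real) \<Rightarrow> (nat \<times> nat \<Rightarrow> 'a) measure" where
  "wsbm_measure \<mu> n p q =
     (\<Pi>\<^sub>M e\<in>pairs n. density \<mu> (\<lambda>x. ennreal
        (if true_assign n (fst e) = true_assign n (snd e) then p x else q x)))"

text \<open>Failure event of the MLE: some balanced assignment inducing a different partition
has likelihood at least that of the truth (ties count as failure).\<close>
definition mle_failure ::
  "'a measure \<Rightarrow> nat \<Rightarrow> ('a \<Rightarrow> real) \<Rightarrow> ('a \<Rightarrow> real) \<Rightarrow> (nat \<times> nat \<Rightarrow> 'a) set" where
  "mle_failure \<mu> n p q =
     {w \<in> space (wsbm_measure \<mu> n p q). \<exists>\<sigma>. balanced n \<sigma> \<and>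
        \<not> same_partition n \<sigma> (true_assign n) \<and>
        likelihood n p q (true_assign n) w \<le> likelihood n p q \<sigma> w}"

definition renyi_half :: "'a measure \<Rightarrow> ('a \<Rightarrow> real) \<Rightarrow> ('a \<Rightarrow> real) \<Rightarrow> real" where
  "renyi_half \<mu> p q = - 2 * ln (\<integral>x. sqrt (p x * q x) \<partial>\<mu>)"

definition mle_bound :: "nat \<Rightarrow> real \<Rightarrow> real" where
  "mle_bound n I =
     (\<Sum>k = 1..n div 2. exp (2 * real k * (ln (real n / real k) + 1)
                              - 2 * real k * (real n - real k) * I))"

end

theory Submission
  imports Defs
begin


lemma pow_div_fact_le_exp:
  fixes x :: real assumes "0 \<le> x" shows "x ^ k / fact k \<le> exp x"
proof -
  have s: "(\<lambda>n. x^n /\<^sub>R fact n) sums exp x" by (rule exp_converges)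
  have nn: "\<And>n. 0 \<le> x^n /\<^sub>R fact n" using assms by simp
  have "x ^ k / fact k = x^k /\<^sub>R fact k" by (simp add: divide_inverse_commute)
  also have "\<dots> \<le> (\<Sum>n\<in>{..<Suc k}. x^n /\<^sub>R fact n)"
    by (rule member_le_sum) (use nn in auto)
  also have "\<dots> \<le> (\<Sum>n. x^n /\<^sub>R fact n)"
    by (rule sum_le_suminf[OF sums_summable[OF s]]) (use nn in auto)
  finally show ?thesis using sums_unique[OF s] by simp
qed

lemma choose_bound:
  assumes "1 \<le> k" "k \<le> n"
  shows "real (n choose k) ^ 2 \<le> exp (2 * real k * (ln (real n / real k) + 1))"
proof -
  have k0: "real k > 0" using assms by simp
  have n0: "real n > 0" using assms by simp
  have f: "fact k > (0::real)" by simp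
  have a: "real (n choose k) * fact k \<le> real n ^ k"
    using binomial_fact_pow[of n k] by (metis of_nat_fact of_nat_le_iff of_nat_mult of_nat_power)
  have b: "real k ^ k \<le> exp (real k) * fact k"
    using pow_div_fact_le_exp[of "real k" k] f by (simp add: divide_le_eq)
  have "real (n choose k) * real k ^ k \<le> real (n choose k) * (exp (real k) * fact k)"
    by (rule mult_left_mono[OF b]) simp
  also have "\<dots> = exp (real k) * (real (n choose k) * fact k)" by simp
  also have "\<dots> \<le> exp (real k) * real n ^ k" by (rule mult_left_mono[OF a]) simp
  finally have c: "real (n choose k) \<le> exp (real k) * (real n / real k) ^ k"
    using k0 by (simp add: power_divide field_simps)
  have d: "exp (real k) * (real n / real k) ^ k = exp (real k * (ln (real n / real k) + 1))"
    using k0 n0 by (simp add: exp_add exp_of_nat_mult distrib_left mult.commute)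
  have "real (n choose k) ^ 2 \<le> (exp (real k * (ln (real n / real k) + 1))) ^ 2"
    using c d by (intro power_mono) auto
  also have "\<dots> = exp (2 * real k * (ln (real n / real k) + 1))"
    by (simp add: exp_of_nat_mult[symmetric] mult.assoc)
  finally show ?thesis .
qed



definition tf :: "nat \<Rightarrow> ('a\<Rightarrow>real) \<Rightarrow> ('a\<Rightarrow>real) \<Rightarrow> nat\<times>nat \<Rightarrow> 'a \<Rightarrow> real" where
  "tf n p q e x = (if true_assign n (fst e) = true_assign n (snd e) then p x else q x)"
definition sf :: "nat \<Rightarrow> ('a\<Rightarrow>real) \<Rightarrow> ('a\<Rightarrow>real) \<Rightarrow> nat\<times>nat \<Rightarrow> 'a \<Rightarrow> real" where
  "sf n p q e x = (if true_assign n (fst e) = true_assign n (snd e) then q x else p x)"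
definition Mf :: "'a measure \<Rightarrow> nat \<Rightarrow> ('a\<Rightarrow>real) \<Rightarrow> ('a\<Rightarrow>real) \<Rightarrow> nat\<times>nat \<Rightarrow> 'a measure" where
  "Mf \<mu> n p q e = density \<mu> (\<lambda>x. ennreal (tf n p q e x))"
definition flip :: "nat \<Rightarrow> nat set \<Rightarrow> nat \<Rightarrow> bool" where
  "flip n X i = (true_assign n i \<noteq> (i \<in> X))"
definition Dset :: "nat \<Rightarrow> nat set \<Rightarrow> (nat \<times> nat) set" where
  "Dset n X = {e \<in> pairs n. (fst e \<in> X) \<noteq> (snd e \<in> X)}"

lemma wsbm_eq: "wsbm_measure \<mu> n p q = PiM (pairs n) (Mf \<mu> n p q)"
  unfolding wsbm_measure_def Mf_def tf_def by simp

lemma finite_pairs: "finite (pairs n)"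
  by (rule finite_subset[of _ "{..<2*n} \<times> {..<2*n}"]) (auto simp: pairs_def)

context
  fixes \<mu> :: "'a measure" and n :: nat and p q :: "'a \<Rightarrow> real"
  assumes dp: "is_density \<mu> p" and dq: "is_density \<mu> q"
begin

lemma pm[measurable]: "p \<in> borel_measurable \<mu>" using dp by (simp add: is_density_def)
lemma qm[measurable]: "q \<in> borel_measurable \<mu>" using dq by (simp add: is_density_def)
lemma pnn: "x \<in> space \<mu> \<Longrightarrow> 0 \<le> p x" using dp by (simp add: is_density_def)
lemma qnn: "x \<in> space \<mu> \<Longrightarrow> 0 \<le> q x" using dq by (simp add: is_density_def)

lemma tfm[measurable]: "tf n p q e \<in> borel_measurable \<mu>" unfolding tf_def by simp
lemma sfm[measurable]: "sf n p q e \<in> borel_measurable \<mu>" unfolding sf_def by simp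

lemma prob_Mf: "prob_space (Mf \<mu> n p q e)"
proof (rule prob_spaceI)
  have "emeasure (Mf \<mu> n p q e) (space (Mf \<mu> n p q e)) = (\<integral>\<^sup>+ x. ennreal (tf n p q e x) \<partial>\<mu>)"
    unfolding Mf_def by (subst emeasure_density) (auto intro!: nn_integral_cong)
  also have "\<dots> = 1" using dp dq
    by (cases "true_assign n (fst e) = true_assign n (snd e)") (simp_all add: tf_def is_density_def)
  finally show "emeasure (Mf \<mu> n p q e) (space (Mf \<mu> n p q e)) = 1" .
qed

interpretation PP: product_prob_space "Mf \<mu> n p q" "pairs n"
proof -
  show "product_prob_space (Mf \<mu> n p q)"
    unfolding product_prob_space_def product_prob_space_axioms_def product_sigma_finite_def
    using prob_Mf prob_space_imp_sigma_finite by blast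
qed

abbreviation "P \<equiv> PiM (pairs n) (Mf \<mu> n p q)"

lemma lik_ta: "likelihood n p q (true_assign n) w = (\<Prod>e\<in>pairs n. tf n p q e (w e))"
  unfolding likelihood_def tf_def by simp

lemma lik_flip: "likelihood n p q (flip n X) w =
   (\<Prod>e\<in>pairs n. if e \<in> Dset n X then sf n p q e (w e) else tf n p q e (w e))"
  unfolding likelihood_def
  by (rule prod.cong) (auto simp: tf_def sf_def flip_def Dset_def)

lemma meas_comp: "(\<lambda>w. f (w e)) \<in> borel_measurable P" if "f \<in> borel_measurable \<mu>" "e \<in> pairs n"
  for f :: "'a \<Rightarrow> real"
proof -
  have eq: "measurable (Mf \<mu> n p q e) borel = measurable \<mu> borel" unfolding Mf_def
    by (rule measurable_cong_sets) auto
  have "f \<in> borel_measurable (Mf \<mu> n p q e)" unfolding eq by (rule that(1))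
  then show ?thesis by (intro measurable_compose[OF measurable_component_singleton[OF that(2)]])
qed

lemma E_sets: "{w \<in> space P. likelihood n p q (true_assign n) w \<le> likelihood n p q (flip n X) w} \<in> sets P"
proof -
  have a: "(\<lambda>w. likelihood n p q (true_assign n) w) \<in> borel_measurable P"
    unfolding lik_ta by (intro borel_measurable_prod meas_comp tfm)
  have b: "(\<lambda>w. likelihood n p q (flip n X) w) \<in> borel_measurable P"
    unfolding lik_flip by (intro borel_measurable_prod) (auto intro!: meas_comp tfm sfm)
  show ?thesis by (rule borel_measurable_le[OF a b])
qed

lemma AE_pos: "AE w in P. \<forall>e\<in>pairs n. 0 < tf n p q e (w e)"
proof (rule AE_finite_allI[OF finite_pairs])
  fix e assume e: "e \<in> pairs n"
  have "AE x in Mf \<mu> n p q e. 0 < tf n p q e x" unfolding Mf_def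
    by (subst AE_density) auto
  then show "AE w in P. 0 < tf n p q e (w e)"
    by (rule AE_PiM_component[OF prob_Mf e])
qed

definition "Bp = (\<integral>\<^sup>+ x. ennreal (sqrt (p x * q x)) \<partial>\<mu>)"

lemma Bp_le1: "Bp \<le> 1"
proof -
  have "Bp \<le> (\<integral>\<^sup>+ x. ennreal (1/2) * ennreal (p x) + ennreal (1/2) * ennreal (q x) \<partial>\<mu>)"
    unfolding Bp_def
  proof (rule nn_integral_mono)
    fix x assume x: "x \<in> space \<mu>"
    have "sqrt (p x * q x) \<le> (p x + q x) / 2" using pnn[OF x] qnn[OF x] by (rule arith_geo_mean_sqrt)
    also have "\<dots> = 1/2 * p x + 1/2 * q x" by simp
    finally have c: "sqrt (p x * q x) \<le> 1/2 * p x + 1/2 * q x" .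
    have "ennreal (sqrt (p x * q x)) \<le> ennreal (1/2 * p x + 1/2 * q x)" by (rule ennreal_leI[OF c])
    also have "\<dots> = ennreal (1/2 * p x) + ennreal (1/2 * q x)"
      by (rule ennreal_plus) (use pnn[OF x] qnn[OF x] in auto)
    also have "\<dots> = ennreal (1/2) * ennreal (p x) + ennreal (1/2) * ennreal (q x)"
    proof -
      have m1: "ennreal (1/2 * p x) = ennreal (1/2) * ennreal (p x)" by (rule ennreal_mult) (use pnn[OF x] in auto)
      have m2: "ennreal (1/2 * q x) = ennreal (1/2) * ennreal (q x)" by (rule ennreal_mult) (use qnn[OF x] in auto)
      show ?thesis by (simp only: m1 m2)
    qed
    finally show "ennreal (sqrt (p x * q x)) \<le> ennreal (1/2) * ennreal (p x) + ennreal (1/2) * ennreal (q x)" .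
  qed
  also have "\<dots> = ennreal (1/2) * (\<integral>\<^sup>+ x. ennreal (p x) \<partial>\<mu>) + ennreal (1/2) * (\<integral>\<^sup>+ x. ennreal (q x) \<partial>\<mu>)"
    by (simp add: nn_integral_add nn_integral_cmult)
  also have "\<dots> = ennreal (1/2) + ennreal (1/2)" using dp dq unfolding is_density_def
    by simp
  also have "\<dots> = 1" by (subst ennreal_plus[symmetric]) auto
  finally show ?thesis .
qed

lemma mul_sqrt_div: "0 \<le> a \<Longrightarrow> 0 \<le> b \<Longrightarrow> a * sqrt (b / a) = sqrt (a * b)"
proof (cases "a = 0")
  case False
  assume a: "0 \<le> a" "0 \<le> b"
  have "sqrt (a * b) = sqrt (a^2 * (b / a))" using False by (simp add: power2_eq_square)
  also have "\<dots> = sqrt (a^2) * sqrt (b / a)" by (rule real_sqrt_mult)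
  also have "\<dots> = a * sqrt (b / a)" using a by simp
  finally show ?thesis by simp
qed simp

definition "hf X e x = (if e \<in> Dset n X then sqrt (sf n p q e x / tf n p q e x) else 1)"

lemma hf_int: "(\<integral>\<^sup>+ x. ennreal (hf X e x) \<partial>Mf \<mu> n p q e) = (if e \<in> Dset n X then Bp else 1)"
proof -
  have "(\<integral>\<^sup>+ x. ennreal (hf X e x) \<partial>Mf \<mu> n p q e) = (\<integral>\<^sup>+ x. ennreal (tf n p q e x) * ennreal (hf X e x) \<partial>\<mu>)"
    unfolding Mf_def by (rule nn_integral_density) (auto simp: hf_def)
  also have "\<dots> = (if e \<in> Dset n X then Bp else 1)"
  proof (cases "e \<in> Dset n X")
    case True
    have "(\<integral>\<^sup>+ x. ennreal (tf n p q e x) * ennreal (hf X e x) \<partial>\<mu>) = Bp"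
      unfolding Bp_def
    proof (rule nn_integral_cong)
      fix x assume x: "x \<in> space \<mu>"
      have t: "0 \<le> tf n p q e x" "0 \<le> sf n p q e x" using pnn[OF x] qnn[OF x] by (auto simp: tf_def sf_def)
      have pq: "tf n p q e x * sf n p q e x = p x * q x" by (auto simp: tf_def sf_def)
      show "ennreal (tf n p q e x) * ennreal (hf X e x) = ennreal (sqrt (p x * q x))"
        using True t by (simp add: hf_def ennreal_mult[symmetric] mul_sqrt_div pq)
    qed
    then show ?thesis using True by simp
  next
    case False
    then show ?thesis using dp dq
      by (cases "true_assign n (fst e) = true_assign n (snd e)") (simp_all add: hf_def tf_def is_density_def)
  qed
  finally show ?thesis .
qed

lemma space_P_comp: "w \<in> space P \<Longrightarrow> e \<in> pairs n \<Longrightarrow> w e \<in> space \<mu>"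
  by (auto simp: space_PiM PiE_iff Mf_def)

lemma pointwise:
  assumes w: "w \<in> space P" and pos: "\<forall>e\<in>pairs n. 0 < tf n p q e (w e)"
  shows "indicator {w \<in> space P. likelihood n p q (true_assign n) w \<le> likelihood n p q (flip n X) w} w
     \<le> ennreal (\<Prod>e\<in>pairs n. hf X e (w e))"
proof (cases "likelihood n p q (true_assign n) w \<le> likelihood n p q (flip n X) w")
  case True
  define a where "a e = tf n p q e (w e)" for e
  define b where "b e = (if e \<in> Dset n X then sf n p q e (w e) else tf n p q e (w e))" for e
  have a0: "e \<in> pairs n \<Longrightarrow> 0 < a e" for e using pos a_def by auto
  have b0: "e \<in> pairs n \<Longrightarrow> 0 \<le> b e" for e
    using pnn[OF space_P_comp[OF w]] qnn[OF space_P_comp[OF w]] by (auto simp: b_def tf_def sf_def)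
  have h2: "(hf X e (w e))^2 = b e / a e" if e: "e \<in> pairs n" for e
  proof -
    have 1: "0 < a e" "0 \<le> b e" using a0[OF e] b0[OF e] by auto
    then have "0 \<le> b e / a e" by simp
    show ?thesis
    proof (cases "e \<in> Dset n X")
      case True
      then have "hf X e (w e) = sqrt (b e / a e)" by (simp add: hf_def a_def b_def)
      then show ?thesis using \<open>0 \<le> b e / a e\<close> by simp
    next
      case False
      then show ?thesis using 1 by (simp add: hf_def a_def b_def)
    qed
  qed
  have hnn1: "0 \<le> hf X e (w e)" if e: "e \<in> pairs n" for e
    using a0[OF e] b0[OF e] by (auto simp: hf_def a_def b_def)
  have hnn: "0 \<le> (\<Prod>e\<in>pairs n. hf X e (w e))" by (intro prod_nonneg hnn1)
  have Pa: "0 < prod a (pairs n)" using a0 by (intro prod_pos) auto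
  have le: "prod a (pairs n) \<le> prod b (pairs n)" using True
    unfolding lik_ta lik_flip a_def b_def by simp
  have "(\<Prod>e\<in>pairs n. hf X e (w e))^2 = (\<Prod>e\<in>pairs n. b e / a e)"
    by (simp add: prod_power_distrib h2)
  also have "\<dots> = prod b (pairs n) / prod a (pairs n)" by (rule prod_dividef)
  also have "\<dots> \<ge> 1" using Pa le by simp
  finally have "1^2 \<le> (\<Prod>e\<in>pairs n. hf X e (w e))^2" by simp
  then have "1 \<le> (\<Prod>e\<in>pairs n. hf X e (w e))" using hnn by (rule power2_le_imp_le)
  then show ?thesis using True w by simp
qed simp

lemma chernoff:
  "measure P {w \<in> space P. likelihood n p q (true_assign n) w \<le> likelihood n p q (flip n X) w}
     \<le> enn2real Bp ^ card (Dset n X)"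
proof -
  let ?E = "{w \<in> space P. likelihood n p q (true_assign n) w \<le> likelihood n p q (flip n X) w}"
  have hm: "(\<lambda>x. ennreal (hf X e x)) \<in> borel_measurable (Mf \<mu> n p q e)" for e
  proof -
    have eq: "measurable (Mf \<mu> n p q e) borel = measurable \<mu> borel" unfolding Mf_def
      by (rule measurable_cong_sets) auto
    show ?thesis unfolding eq hf_def by measurable
  qed
  have "emeasure P ?E = (\<integral>\<^sup>+ w. indicator ?E w \<partial>P)" using E_sets by simp
  also have "\<dots> \<le> (\<integral>\<^sup>+ w. ennreal (\<Prod>e\<in>pairs n. hf X e (w e)) \<partial>P)"
  proof (rule nn_integral_mono_AE)
    show "AE w in P. indicator ?E w \<le> ennreal (\<Prod>e\<in>pairs n. hf X e (w e))"
      using AE_space AE_pos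
    proof eventually_elim
      case (elim w)
      then show ?case by (rule pointwise)
    qed
  qed
  also have "\<dots> = (\<integral>\<^sup>+ w. (\<Prod>e\<in>pairs n. ennreal (hf X e (w e))) \<partial>P)"
  proof (rule nn_integral_cong)
    fix w assume w: "w \<in> space P"
    have "0 \<le> hf X e (w e)" if e: "e \<in> pairs n" for e
      using pnn[OF space_P_comp[OF w e]] qnn[OF space_P_comp[OF w e]]
      by (auto simp: hf_def tf_def sf_def)
    then show "ennreal (\<Prod>e\<in>pairs n. hf X e (w e)) = (\<Prod>e\<in>pairs n. ennreal (hf X e (w e)))"
      by (simp add: prod_ennreal)
  qed
  also have "\<dots> = (\<Prod>e\<in>pairs n. (\<integral>\<^sup>+ x. ennreal (hf X e x) \<partial>Mf \<mu> n p q e))"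
    by (rule PP.product_nn_integral_prod[OF finite_pairs hm])
  also have "\<dots> = (\<Prod>e\<in>pairs n. (if e \<in> Dset n X then Bp else 1))"
    by (simp add: hf_int)
  also have "\<dots> = Bp ^ card (Dset n X)"
  proof -
    have "Dset n X \<subseteq> pairs n" by (auto simp: Dset_def)
    then have "pairs n \<inter> {e. e \<in> Dset n X} = Dset n X" by auto
    then show ?thesis by (simp add: prod.If_cases[OF finite_pairs])
  qed
  finally have 1: "emeasure P ?E \<le> Bp ^ card (Dset n X)" .
  have fin: "Bp \<noteq> \<top>" using Bp_le1 by (auto simp: top_unique)
  then have "Bp = ennreal (enn2real Bp)" by (simp add: ennreal_enn2real_if)
  then have "Bp ^ card (Dset n X) = ennreal (enn2real Bp ^ card (Dset n X))"
    by (metis ennreal_power enn2real_nonneg)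
  with 1 have "ennreal (measure P ?E) \<le> ennreal (enn2real Bp ^ card (Dset n X))"
    by (simp add: PP.P.emeasure_eq_measure)
  then show ?thesis by (simp add: ennreal_le_iff)
qed

end


lemma card_Dset:
  assumes X: "X \<subseteq> {..<2*n}"
  shows "card X * (2*n - card X) \<le> card (Dset n X)"
proof -
  let ?U = "{..<2*n} - X"
  let ?f = "\<lambda>(x::nat, u::nat). (min x u, max x u)"
  have fin: "finite (Dset n X)"
    by (rule finite_subset[OF _ finite_pairs[of n]]) (auto simp: Dset_def)
  have inj: "inj_on ?f (X \<times> ?U)"
    by (auto simp: inj_on_def min_def max_def split: if_splits)
  have img: "?f ` (X \<times> ?U) \<subseteq> Dset n X"
  proof
    fix y assume "y \<in> ?f ` (X \<times> ?U)"
    then obtain x u where y: "y = (min x u, max x u)" and xu: "x \<in> X" "u < 2*n" "u \<notin> X" by auto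
    have "x < 2*n" using X xu by auto
    moreover have "x \<noteq> u" using xu by auto
    ultimately show "y \<in> Dset n X" using xu unfolding y Dset_def pairs_def
      by (cases "x < u") (auto simp: min_def max_def)
  qed
  have "card (X \<times> ?U) \<le> card (Dset n X)"
    by (rule card_inj_on_le[OF inj img fin])
  moreover have "card ?U = 2*n - card X"
    using X by (simp add: card_Diff_subset finite_subset)
  ultimately show ?thesis by (simp add: card_cartesian_product)
qed

lemma lik_cong:
  assumes "(\<forall>i<2*n. \<sigma> i = \<tau> i) \<or> (\<forall>i<2*n. \<sigma> i \<noteq> \<tau> i)"
  shows "likelihood n p q \<sigma> w = likelihood n p q \<tau> w"
  unfolding likelihood_def
proof (rule prod.cong[OF refl])
  fix e assume "e \<in> pairs n"
  then have "fst e < 2*n" "snd e < 2*n" by (auto simp: pairs_def)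
  then have "(\<sigma> (fst e) = \<sigma> (snd e)) = (\<tau> (fst e) = \<tau> (snd e))" using assms by auto
  then show "(if \<sigma> (fst e) = \<sigma> (snd e) then p (w e) else q (w e)) =
        (if \<tau> (fst e) = \<tau> (snd e) then p (w e) else q (w e))" by simp
qed

definition Idx :: "nat \<Rightarrow> nat \<Rightarrow> (nat set \<times> nat set) set" where
  "Idx n k = {S. S \<subseteq> {..<n} \<and> card S = k} \<times> {T. T \<subseteq> {n..<2*n} \<and> card T = k}"

lemma card_Idx: "card (Idx n k) = (n choose k) * (n choose k)"
proof -
  have "card {T. T \<subseteq> {n..<2*n} \<and> card T = k} = n choose k"
    using n_subsets[of "{n..<2*n}" k] by simp
  moreover have "card {S. S \<subseteq> {..<n} \<and> card S = k} = n choose k"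
    using n_subsets[of "{..<n}" k] by simp
  ultimately show ?thesis unfolding Idx_def by (simp add: card_cartesian_product)
qed

lemma finite_Idx: "finite (Idx n k)"
  unfolding Idx_def by auto

lemma Idx_props:
  assumes "(S, T) \<in> Idx n k"
  shows "S \<union> T \<subseteq> {..<2*n}" "card (S \<union> T) = 2 * k"
proof -
  have a: "S \<subseteq> {..<n}" "T \<subseteq> {n..<2*n}" "card S = k" "card T = k"
    using assms by (auto simp: Idx_def)
  then show "S \<union> T \<subseteq> {..<2*n}" by auto
  have "S \<inter> T = {}" using a(1,2) by force
  moreover have "finite S" "finite T" using a finite_subset by auto
  ultimately show "card (S \<union> T) = 2 * k" using a by (simp add: card_Un_disjoint)
qed

lemma covering:
  assumes bal: "balanced n \<sigma>" and nsp: "\<not> same_partition n \<sigma> (true_assign n)"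
  shows "\<exists>k\<in>{1..n div 2}. \<exists>ST\<in>Idx n k.
           likelihood n p q \<sigma> w = likelihood n p q (flip n (fst ST \<union> snd ST)) w"
proof -
  let ?ta = "true_assign n"
  define S0 where "S0 = {i. i < n \<and> \<not> \<sigma> i}"
  define T0 where "T0 = {i. n \<le> i \<and> i < 2*n \<and> \<sigma> i}"
  define k where "k = card S0"
  have S0s: "S0 \<subseteq> {..<n}" and T0s: "T0 \<subseteq> {n..<2*n}" by (auto simp: S0_def T0_def)
  have finS: "finite S0" and finT: "finite T0" using S0s T0s finite_subset by auto
  have kn: "k \<le> n" unfolding k_def using card_mono[OF _ S0s] by simp
  have "{i. i < 2 * n \<and> \<sigma> i} = ({..<n} - S0) \<union> T0" by (auto simp: S0_def T0_def)
  moreover have "({..<n} - S0) \<inter> T0 = {}" by (auto simp: S0_def T0_def)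
  ultimately have "card {i. i < 2 * n \<and> \<sigma> i} = (n - k) + card T0"
    using finT S0s by (simp add: card_Un_disjoint card_Diff_subset finS k_def)
  with bal have cT: "card T0 = k" using kn by (simp add: balanced_def)
  have fl0: "flip n (S0 \<union> T0) i = \<sigma> i" if "i < 2*n" for i
    using that by (auto simp: flip_def true_assign_def S0_def T0_def)
  have k1: "1 \<le> k"
  proof (rule ccontr)
    assume "\<not> 1 \<le> k"
    then have "card S0 = 0" "card T0 = 0" using cT k_def by auto
    then have "S0 = {}" "T0 = {}" using finS finT by (simp_all add: card_0_eq)
    then have "\<forall>i<2*n. \<sigma> i = ?ta i" using fl0 by (auto simp: flip_def)
    then show False using nsp by (simp add: same_partition_def)
  qed
  have kn1: "k < n"
  proof (rule ccontr)
    assume "\<not> k < n"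
    then have "card S0 = card {..<n}" "card T0 = card {n..<2*n}" using kn cT k_def by auto
    then have ST: "S0 = {..<n}" "T0 = {n..<2*n}"
      using card_subset_eq[OF _ S0s] card_subset_eq[OF _ T0s] by auto
    have "\<forall>i<2*n. \<sigma> i \<noteq> ?ta i"
    proof (intro allI impI)
      fix i assume i: "i < 2*n"
      show "\<sigma> i \<noteq> ?ta i" using fl0[OF i] i ST by (auto simp: flip_def true_assign_def)
    qed
    then show False using nsp by (simp add: same_partition_def)
  qed
  show ?thesis
  proof (cases "k \<le> n div 2")
    case True
    have "(S0, T0) \<in> Idx n k" using S0s T0s cT by (auto simp: Idx_def k_def)
    moreover have "likelihood n p q \<sigma> w = likelihood n p q (flip n (S0 \<union> T0)) w"
      by (rule lik_cong) (use fl0 in auto)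
    ultimately show ?thesis using True k1 by force
  next
    case False
    define S1 where "S1 = {..<n} - S0"
    define T1 where "T1 = {n..<2*n} - T0"
    have "card S1 = n - k" unfolding S1_def k_def using S0s by (simp add: card_Diff_subset finS)
    moreover have "card T1 = n - k" unfolding T1_def using T0s cT by (simp add: card_Diff_subset finT)
    ultimately have "(S1, T1) \<in> Idx n (n - k)" by (auto simp: Idx_def S1_def T1_def)
    moreover have "flip n (S1 \<union> T1) i = (\<not> \<sigma> i)" if "i < 2*n" for i
      using that by (auto simp: flip_def S1_def T1_def S0_def T0_def true_assign_def)
    then have "likelihood n p q \<sigma> w = likelihood n p q (flip n (S1 \<union> T1)) w"
      by (intro lik_cong) auto
    moreover have "n - k \<in> {1..n div 2}" using False kn1 by auto
    ultimately show ?thesis by force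
  qed
qed



context
  fixes \<mu> :: "'a measure" and n :: nat and p q :: "'a \<Rightarrow> real"
  assumes dp: "is_density \<mu> p" and dq: "is_density \<mu> q"
begin

abbreviation "PM \<equiv> PiM (pairs n) (Mf \<mu> n p q)"

interpretation PP: product_prob_space "Mf \<mu> n p q" "pairs n"
proof -
  show "product_prob_space (Mf \<mu> n p q)"
    unfolding product_prob_space_def product_prob_space_axioms_def product_sigma_finite_def
    using prob_Mf[OF dp dq] prob_space_imp_sigma_finite by blast
qed

lemma term_bound:
  assumes k: "k \<in> {1..n div 2}" and ST: "ST \<in> Idx n k"
  shows "measure PM {w \<in> space PM. likelihood n p q (true_assign n) w \<le> likelihood n p q (flip n (fst ST \<union> snd ST)) w}
     \<le> exp (- 2 * real k * (real n - real k) * renyi_half \<mu> p q)"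
proof -
  define B where "B = enn2real (Bp \<mu> p q)"
  define X where "X = fst ST \<union> snd ST"
  define m where "m = 2 * k * (2 * n - 2 * k)"
  have fin: "Bp \<mu> p q \<noteq> \<top>" using Bp_le1[OF dp dq] by (auto simp: top_unique)
  then have BB: "Bp \<mu> p q = ennreal B" by (simp add: B_def ennreal_enn2real_if)
  have B0: "0 \<le> B" by (simp add: B_def)
  have B1: "B \<le> 1" using Bp_le1[OF dp dq] BB by simp
  have I: "renyi_half \<mu> p q = - 2 * ln B"
  proof -
    have "(\<integral>x. sqrt (p x * q x) \<partial>\<mu>) = enn2real (\<integral>\<^sup>+ x. ennreal (sqrt (p x * q x)) \<partial>\<mu>)"
      by (rule integral_eq_nn_integral) (use pnn[OF dp dq] qnn[OF dp dq] pm[OF dp dq] qm[OF dp dq] in auto)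
    then show ?thesis unfolding renyi_half_def B_def Bp_def[OF dp dq] by simp
  qed
  have Xp: "X \<subseteq> {..<2*n}" "card X = 2 * k" using Idx_props[of "fst ST" "snd ST" n k] ST
    by (auto simp: X_def)
  have "m \<le> card (Dset n X)" using card_Dset[OF Xp(1)] Xp(2) by (simp add: m_def)
  have "measure PM {w \<in> space PM. likelihood n p q (true_assign n) w \<le> likelihood n p q (flip n X) w}
        \<le> B ^ card (Dset n X)" using chernoff[OF dp dq, of n X] by (simp add: B_def)
  also have "\<dots> \<le> B ^ m" by (rule power_decreasing[OF \<open>m \<le> card (Dset n X)\<close> B0 B1])
  also have "\<dots> \<le> exp (- 2 * real k * (real n - real k) * renyi_half \<mu> p q)"
  proof (cases "B = 0")
    case True
    have "k \<ge> 1" "k < n" using k by auto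
    then have "m > 0" by (simp add: m_def)
    then show ?thesis using True by (simp add: power_0_left)
  next
    case False
    then have Bp: "B > 0" using B0 by simp
    have kn: "k \<le> n" using k by auto
    have rm: "real m = 4 * real k * (real n - real k)" using kn
      by (simp add: m_def of_nat_diff algebra_simps)
    then have "- 2 * real k * (real n - real k) * renyi_half \<mu> p q = real m * ln B"
      unfolding I rm by (simp add: algebra_simps)
    then have "exp (- 2 * real k * (real n - real k) * renyi_half \<mu> p q) = B ^ m"
      using Bp by (simp add: exp_of_nat_mult)
    then show ?thesis by simp
  qed
  finally show ?thesis by (simp add: X_def)
qed

lemma main: "measure (wsbm_measure \<mu> n p q) (mle_failure \<mu> n p q) \<le> mle_bound n (renyi_half \<mu> p q)"
proof -
  let ?E = "\<lambda>X. {w \<in> space PM. likelihood n p q (true_assign n) w \<le> likelihood n p q (flip n X) w}"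
  let ?K = "{1..n div 2}"
  let ?U = "\<lambda>k. \<Union>ST\<in>Idx n k. ?E (fst ST \<union> snd ST)"
  let ?b = "\<lambda>k. exp (- 2 * real k * (real n - real k) * renyi_half \<mu> p q)"
  have Esets: "?E X \<in> sets PM" for X by (rule E_sets[OF dp dq])
  have Usets: "?U k \<in> sets PM" for k using finite_Idx Esets by blast
  have sub: "mle_failure \<mu> n p q \<subseteq> (\<Union>k\<in>?K. ?U k)"
  proof
    fix w assume "w \<in> mle_failure \<mu> n p q"
    then obtain \<sigma> where w: "w \<in> space PM" and bal: "balanced n \<sigma>"
      and nsp: "\<not> same_partition n \<sigma> (true_assign n)"
      and le: "likelihood n p q (true_assign n) w \<le> likelihood n p q \<sigma> w"
      unfolding mle_failure_def wsbm_eq by auto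
    from covering[OF bal nsp, of p q w] obtain k ST where "k \<in> ?K" "ST \<in> Idx n k"
      "likelihood n p q \<sigma> w = likelihood n p q (flip n (fst ST \<union> snd ST)) w" by blast
    then show "w \<in> (\<Union>k\<in>?K. ?U k)" using w le by auto
  qed
  have "measure PM (mle_failure \<mu> n p q) \<le> measure PM (\<Union>k\<in>?K. ?U k)"
    by (rule PP.P.finite_measure_mono[OF sub]) (use Usets in blast)
  also have "\<dots> \<le> (\<Sum>k\<in>?K. measure PM (?U k))"
    by (rule measure_UNION_le) (use Usets in auto)
  also have "\<dots> \<le> (\<Sum>k\<in>?K. \<Sum>ST\<in>Idx n k. measure PM (?E (fst ST \<union> snd ST)))"
    by (intro sum_mono measure_UNION_le finite_Idx Esets)
  also have "\<dots> \<le> (\<Sum>k\<in>?K. \<Sum>ST\<in>Idx n k. ?b k)"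
    by (intro sum_mono term_bound)
  also have "\<dots> = (\<Sum>k\<in>?K. real ((n choose k) * (n choose k)) * ?b k)"
    by (simp add: card_Idx)
  also have "\<dots> \<le> mle_bound n (renyi_half \<mu> p q)"
    unfolding mle_bound_def
  proof (rule sum_mono)
    fix k assume k: "k \<in> ?K"
    have "real ((n choose k) * (n choose k)) = real (n choose k) ^ 2" by (simp add: power2_eq_square)
    also have "\<dots> \<le> exp (2 * real k * (ln (real n / real k) + 1))"
      by (rule choose_bound) (use k in auto)
    finally have "real ((n choose k) * (n choose k)) * ?b k \<le> exp (2 * real k * (ln (real n / real k) + 1)) * ?b k"
      by (rule mult_right_mono) simp
    moreover have "exp (2 * real k * (ln (real n / real k) + 1)
        - 2 * real k * (real n - real k) * renyi_half \<mu> p q) = exp (2 * real k * (ln (real n / real k) + 1)) * ?b k"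
      by (subst exp_add[symmetric], rule arg_cong[where f=exp], simp add: algebra_simps)
    ultimately show "real ((n choose k) * (n choose k)) * ?b k \<le> exp (2 * real k * (ln (real n / real k) + 1)
        - 2 * real k * (real n - real k) * renyi_half \<mu> p q)"
      by simp
  qed
  finally show ?thesis by (simp add: wsbm_eq)
qed

end

theorem theorem1:
  shows "(\<forall>(n::nat) (p::real \<Rightarrow> real) q.
            is_density lborel p \<and> is_density lborel q \<longrightarrow>
            measure (wsbm_measure lborel n p q) (mle_failure lborel n p q)
              \<le> mle_bound n (renyi_half lborel p q))
       \<and> (\<forall>(n::nat) (p::nat \<Rightarrow> real) q.
            is_density (count_space UNIV) p \<and> is_density (count_space UNIV) q \<longrightarrow>
            measure (wsbm_measure (count_space UNIV) n p q) (mle_failure (count_space UNIV) n p q)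
              \<le> mle_bound n (renyi_half (count_space UNIV) p q))"
  by (auto intro: main)


end
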